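(* If $p$ is an odd prime then $\mathcal{D}_p\sim(1-A_p^2)^{\frac{p-3}{2}}$; if $p$ is twice an odd prime then $\mathcal{D}_p\sim\sqrt2\,(1+\alpha_p^4)^{\frac{p/2-3}{2}}$.
   Context: $\alpha_p=e^{2\pi i/(4p)}$, $A_p=\alpha_p^2$; $k_p=\mathbb{Z}[A_p,1/p]$ if $p\equiv-1\pmod 4$, $\mathbb{Z}[\alpha_p,1/p]$ if $p\equiv1,2\pmod4$; $\mathcal{O}_p$ its ring of integers. $\mathcal{D}_p=\langle S^3_\flat\rangle_p^{-1}$ where $\langle\ \rangle_p$ is the Blanchet–Habegger–Masbaum–Vogel quantum invariant at $A=A_p$ and $S^3_\flat$ is $S^3$ with weight $0$. For $a,b\in\mathcal{O}_p$ (or nonzero elements of its fraction field), $a\sim b$ means $a/b$ is a unit of $\mathcal{O}_p$. *)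

theory Defs
  imports Complex_Main "HOL-Computational_Algebra.Polynomial"
begin

definition alpha_p :: "nat \<Rightarrow> complex" where
  "alpha_p p = cis (2 * pi / (4 * real p))"

definition A_p :: "nat \<Rightarrow> complex" where
  "A_p p = (alpha_p p)^2"

definition gen_p :: "nat \<Rightarrow> complex" where
  "gen_p p = (if p mod 4 = 3 then A_p p else alpha_p p)"

text \<open>The number field Q(z) = Q[z] for algebraic z.\<close>
definition rat_field_gen :: "complex \<Rightarrow> complex set" where
  "rat_field_gen z = {poly (map_poly of_rat q) z | q. True}"

definition algebraic_integer :: "complex \<Rightarrow> bool" where
  "algebraic_integer x \<longleftrightarrow>
     (\<exists>q :: int poly. lead_coeff q = 1 \<and> poly (map_poly of_int q) x = 0)"

definition O_p :: "nat \<Rightarrow> complex set" where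
  "O_p p = {x \<in> rat_field_gen (gen_p p). algebraic_integer x}"

definition assoc_p :: "nat \<Rightarrow> complex \<Rightarrow> complex \<Rightarrow> bool" where
  "assoc_p p a b \<longleftrightarrow> a \<noteq> 0 \<and> b \<noteq> 0 \<and> a / b \<in> O_p p \<and> b / a \<in> O_p p"

definition qint :: "nat \<Rightarrow> nat \<Rightarrow> complex" where
  "qint p n = ((A_p p)^(2*n) - (inverse (A_p p))^(2*n)) / ((A_p p)^2 - (inverse (A_p p))^2)"

definition bracket_e :: "nat \<Rightarrow> nat \<Rightarrow> complex" where
  "bracket_e p i = (-1)^i * qint p (i + 1)"

definition colours :: "nat \<Rightarrow> nat set" where
  "colours p = (if odd p then {i. i \<le> p - 3 \<and> even i} else {0 .. p div 2 - 2})"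

text \<open>D_p^2 = eta^{-2} = sum over colours of <e_i>^2, where <S^3_flat>_p = eta.\<close>
definition D_sq :: "nat \<Rightarrow> complex" where
  "D_sq p = (\<Sum>i\<in>colours p. (bracket_e p i)^2)"

end

theory Submission
  imports Defs "Jordan_Normal_Form.Char_Poly"
begin


definition ZG :: "nat \<Rightarrow> complex \<Rightarrow> complex set" where
  "ZG N g = {x. \<exists>c::nat \<Rightarrow> int. x = (\<Sum>k<N. of_int (c k) * g^k)}"

lemma ZG_0: "0 \<in> ZG N g"
  unfolding ZG_def by (rule CollectI, rule exI[of _ "\<lambda>_. 0"]) simp

lemma ZG_add: "x \<in> ZG N g \<Longrightarrow> y \<in> ZG N g \<Longrightarrow> x + y \<in> ZG N g"
  unfolding ZG_def
proof (clarify)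
  fix a b :: "nat \<Rightarrow> int"
  show "\<exists>c. (\<Sum>k<N. of_int (a k) * g ^ k) + (\<Sum>k<N. of_int (b k) * g ^ k) = (\<Sum>k<N. of_int (c k) * g ^ k)"
    by (rule exI[of _ "\<lambda>k. a k + b k"]) (simp add: sum.distrib distrib_right)
qed

lemma ZG_smult: "x \<in> ZG N g \<Longrightarrow> of_int m * x \<in> ZG N g"
  unfolding ZG_def
proof (clarify)
  fix a :: "nat \<Rightarrow> int"
  show "\<exists>c. of_int m * (\<Sum>k<N. of_int (a k) * g ^ k) = (\<Sum>k<N. of_int (c k) * g ^ k)"
    by (rule exI[of _ "\<lambda>k. m * a k"]) (simp add: sum_distrib_left mult.assoc)
qed

lemma ZG_neg: "x \<in> ZG N g \<Longrightarrow> - x \<in> ZG N g"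
  using ZG_smult[of x N g "-1"] by simp

lemma ZG_1: assumes "N > 0" shows "1 \<in> ZG N g"
  unfolding ZG_def
proof (rule CollectI, rule exI[of _ "\<lambda>k. if k = 0 then 1 else 0"])
  have "(\<Sum>k<N. of_int (if k = 0 then 1 else 0) * g ^ k) = (\<Sum>k<N. if k = 0 then (1::complex) else 0)"
    by (rule sum.cong) auto
  then show "1 = (\<Sum>k<N. of_int (if k = 0 then 1 else 0) * g ^ k)" using assms by simp
qed

lemma ZG_mult_g:
  assumes "g ^ N = 1" "x \<in> ZG N g" shows "g * x \<in> ZG N g"
proof (cases N)
  case 0 then show ?thesis using assms by (simp add: ZG_def)
next
  case (Suc M)
  from assms obtain a where a: "x = (\<Sum>k<N. of_int (a k) * g^k)" unfolding ZG_def by auto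
  define c where "c k = (if k = 0 then a M else a (k - 1))" for k
  have "g * x = (\<Sum>k<Suc M. of_int (a k) * g^(Suc k))"
    unfolding a Suc by (simp add: sum_distrib_left algebra_simps)
  also have "\<dots> = (\<Sum>k<M. of_int (a k) * g^(Suc k)) + of_int (a M)"
    using assms(1) Suc by simp
  also have "\<dots> = (\<Sum>k<Suc M. of_int (c k) * g^k)"
    by (subst sum.lessThan_Suc_shift) (simp add: c_def)
  finally show ?thesis unfolding ZG_def Suc by blast
qed

lemma ZG_mult_gpow:
  assumes "g ^ N = 1" "x \<in> ZG N g" shows "g^j * x \<in> ZG N g"
  by (induction j) (use assms ZG_mult_g in \<open>auto simp: mult.assoc\<close>)

lemma ZG_sum: "(\<And>i. i \<in> S \<Longrightarrow> f i \<in> ZG N g) \<Longrightarrow> sum f S \<in> ZG N g"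
  by (induction S rule: infinite_finite_induct) (auto intro: ZG_0 ZG_add)

lemma ZG_mult:
  assumes "g ^ N = 1" "x \<in> ZG N g" "y \<in> ZG N g" shows "x * y \<in> ZG N g"
proof -
  from assms obtain b where b: "y = (\<Sum>k<N. of_int (b k) * g^k)" unfolding ZG_def by auto
  have "x * y = (\<Sum>k<N. of_int (b k) * (g^k * x))"
    unfolding b by (simp add: sum_distrib_left algebra_simps)
  also have "\<dots> \<in> ZG N g"
    by (rule ZG_sum, rule ZG_smult, rule ZG_mult_gpow[OF assms(1,2)])
  finally show ?thesis .
qed

lemma ZG_gpow: "g ^ N = 1 \<Longrightarrow> N > 0 \<Longrightarrow> g ^ j \<in> ZG N g"
  using ZG_mult_gpow[of g N 1 j] ZG_1[of N g] by simp

lemma ZG_alg_int: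
  assumes g: "g ^ N = 1" and N: "N > 0" and x: "x \<in> ZG N g"
  shows "algebraic_integer x"
proof -
  have "\<forall>j. \<exists>c. x * g^j = (\<Sum>k<N. of_int (c k) * g^k)"
    using ZG_mult_gpow[OF g x] unfolding ZG_def by (auto simp: mult.commute)
  then obtain C where C: "\<And>j. x * g^j = (\<Sum>k<N. of_int (C j k) * g^k)" by metis
  define M :: "int mat" where "M = mat N N (\<lambda>(j,k). C j k)"
  define v :: "complex vec" where "v = vec N (\<lambda>k. g^k)"
  have Mc: "M \<in> carrier_mat N N" unfolding M_def by simp
  have Mc': "of_int_hom.mat_hom M \<in> carrier_mat N N" using Mc by simp
  have ev: "eigenvector (of_int_hom.mat_hom M) v x"
    unfolding eigenvector_def
  proof (intro conjI)
    show "v \<in> carrier_vec (dim_row (of_int_hom.mat_hom M))" unfolding v_def M_def by simp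
    show "v \<noteq> 0\<^sub>v (dim_row (of_int_hom.mat_hom M))"
    proof
      assume "v = 0\<^sub>v (dim_row (of_int_hom.mat_hom M))"
      then have "v $ 0 = 0" using N unfolding M_def by simp
      then show False using N unfolding v_def by simp
    qed
    show "of_int_hom.mat_hom M *\<^sub>v v = x \<cdot>\<^sub>v v"
    proof (rule eq_vecI)
      fix i assume "i < dim_vec (x \<cdot>\<^sub>v v)"
      then have i: "i < N" unfolding v_def by simp
      have "(of_int_hom.mat_hom M *\<^sub>v v) $ i = (\<Sum>k<N. of_int (C i k) * g^k)"
        using i unfolding M_def v_def by (simp add: mult_mat_vec_def scalar_prod_def lessThan_atLeast0)
      also have "\<dots> = (x \<cdot>\<^sub>v v) $ i" using i C[of i] unfolding v_def by simp
      finally show "(of_int_hom.mat_hom M *\<^sub>v v) $ i = (x \<cdot>\<^sub>v v) $ i" .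
    qed (simp add: M_def v_def)
  qed
  then have "poly (char_poly (of_int_hom.mat_hom M)) x = 0"
    using eigenvalue_root_char_poly[OF Mc'] unfolding eigenvalue_def by blast
  then have "poly (map_poly of_int (char_poly M)) x = 0"
    using of_int_hom.char_poly_hom[OF Mc] by metis
  moreover have "lead_coeff (char_poly M) = 1" using degree_monic_char_poly[OF Mc] by simp
  ultimately show ?thesis unfolding algebraic_integer_def by blast
qed




lemma cis_pow_ne1:
  assumes n: "n > 0" and k: "0 < k" "k < n"
  shows "cis (2 * pi / real n) ^ k \<noteq> 1"
proof
  assume "cis (2 * pi / real n) ^ k = 1"
  then have "cis (real k * (2 * pi / real n)) = 1" by (simp add: DeMoivre)
  then have "cos (real k * (2 * pi / real n)) = 1"
    by (metis complex.sel(1) cis.sel(1) one_complex.sel(1))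
  then obtain m :: int where m: "real k * (2 * pi / real n) = real_of_int m * 2 * pi"
    using cos_one_2pi_int by blast
  then have "real k = m * real n" using n by (simp add: field_simps)
  then have "int k = m * int n" by (metis of_int_eq_iff of_int_mult of_int_of_nat_eq)
  then show False using k n
  proof (cases "m \<le> 0")
    case True then have "m * int n \<le> 0" using n by (simp add: mult_le_0_iff)
    then show False using \<open>int k = m * int n\<close> k by linarith
  next
    case False then have "m * int n \<ge> int n" using n by simp
    then show False using \<open>int k = m * int n\<close> k by linarith
  qed
qed

lemma cyclo_prod:
  fixes w :: complex
  assumes n: "n > 0" and w1: "w ^ n = 1" and prim: "\<And>k. 0 < k \<Longrightarrow> k < n \<Longrightarrow> w ^ k \<noteq> 1"
  shows "(\<Prod>k\<in>{1..<n}. 1 - w^k) = of_nat n"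
proof -
  have w0: "w \<noteq> 0" proof assume "w = 0" then show False using w1 n by (simp add: zero_power) qed
  define X :: "complex poly" where "X = monom 1 n + [:-1:]"
  define P where "P m = (\<Prod>k<m. [:-(w^k),1:])" for m
  have dvd: "m \<le> n \<Longrightarrow> P m dvd X" for m
  proof (induction m)
    case 0 then show ?case by (simp add: P_def)
  next
    case (Suc m)
    then obtain Q where Q: "X = P m * Q" by (auto elim: dvdE)
    have "poly X (w^m) = 0"
    proof -
    have "(w^m)^n = (w^n)^m" by (simp flip: power_mult add: mult.commute)
    then have "(w^m)^n = 1" using w1 by simp
    then show ?thesis by (simp add: X_def poly_monom)
  qed
    moreover have "poly (P m) (w^m) \<noteq> 0"
      unfolding P_def poly_prod
    proof
      assume "(\<Prod>k<m. poly [:- (w ^ k), 1:] (w ^ m)) = 0"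
      then obtain k where k: "k < m" and eq: "w^m = w^k" by auto
      have "w^(m-k) * w^k = w^k" using eq k by (simp flip: power_add)
      then have "w^(m-k) = 1" using w0 by simp
      then show False using prim[of "m-k"] k Suc.prems by simp
    qed
    ultimately have "poly Q (w^m) = 0" using Q by simp
    then have "[:-(w^m),1:] dvd Q" by (simp add: poly_eq_0_iff_dvd)
    then have "P m * [:-(w^m),1:] dvd P m * Q" by (rule mult_dvd_mono[OF dvd_refl])
    moreover have "P (Suc m) = P m * [:-(w^m),1:]" unfolding P_def by simp
    ultimately show ?case using Q by simp
  qed
  obtain Q where Q: "X = P n * Q" using dvd[of n] by (auto elim: dvdE)
  have degX: "degree X = n" unfolding X_def using n
    by (subst degree_add_eq_left) (auto simp: degree_monom_eq)
  have lcX: "lead_coeff X = 1" using n unfolding degX unfolding X_def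
    by (cases n) (simp_all add: coeff_monom)
  have X0: "X \<noteq> 0" using lcX by auto
  have degP: "degree (P n) = n" unfolding P_def
    by (subst degree_prod_eq_sum_degree) auto
  have lcP: "lead_coeff (P n) = 1" unfolding P_def by (simp add: lead_coeff_prod)
  have "degree X = degree (P n) + degree Q" using Q X0 by (simp add: degree_mult_eq)
  then have dQ: "degree Q = 0" using degX degP by simp
  have "lead_coeff Q = 1" using Q lcX lcP by (simp add: lead_coeff_mult)
  moreover have "Q = [:coeff Q 0:]" using dQ by (simp add: degree_0_id)
  ultimately have "Q = 1" using dQ by (metis one_pCons)
  then have XP: "X = P n" using Q by simp
  define H where "H = (\<Prod>k\<in>{1..<n}. [:-(w^k),1:])"
  have "{..<n} = insert 0 {1..<n}" using n by auto
  then have PH: "P n = [:-1,1:] * H" unfolding P_def H_def by simp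
  have "poly (pderiv X) 1 = of_nat n" unfolding X_def
    by (simp add: pderiv_add pderiv_monom poly_monom pderiv_pCons)
  also have "pderiv X = [:-1,1:] * pderiv H + H" unfolding XP PH pderiv_mult
    by (simp del: mult_pCons_left add: pderiv_pCons)
  finally have "poly H 1 = of_nat n" by simp
  then show ?thesis unfolding H_def poly_prod by simp
qed




definition isU :: "nat \<Rightarrow> complex \<Rightarrow> complex \<Rightarrow> bool" where
  "isU N g x \<longleftrightarrow> x \<in> ZG N g \<and> x \<noteq> 0 \<and> inverse x \<in> ZG N g"

locale rootring =
  fixes N :: nat and g :: complex
  assumes gN: "g ^ N = 1" and Npos: "N > 0"
begin

lemma mult: "x \<in> ZG N g \<Longrightarrow> y \<in> ZG N g \<Longrightarrow> x * y \<in> ZG N g"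
  using ZG_mult[OF gN] by blast

lemma one: "1 \<in> ZG N g" using ZG_1[OF Npos] .

lemma pow: "x \<in> ZG N g \<Longrightarrow> x ^ n \<in> ZG N g"
  by (induction n) (auto intro: mult one)

lemma diff: "x \<in> ZG N g \<Longrightarrow> y \<in> ZG N g \<Longrightarrow> x - y \<in> ZG N g"
  using ZG_add[of x N g "-y"] ZG_neg[of y N g] by simp

lemma prod: "(\<And>i. i \<in> S \<Longrightarrow> f i \<in> ZG N g) \<Longrightarrow> prod f S \<in> ZG N g"
  by (induction S rule: infinite_finite_induct) (auto intro: one mult)

lemma U_mult: "isU N g x \<Longrightarrow> isU N g y \<Longrightarrow> isU N g (x * y)"
  unfolding isU_def by (auto intro: mult simp: inverse_mult_distrib)

lemma U_inv: "isU N g x \<Longrightarrow> isU N g (inverse x)"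
  unfolding isU_def by auto

lemma U_div: "isU N g x \<Longrightarrow> isU N g y \<Longrightarrow> isU N g (x / y)"
  unfolding divide_inverse by (intro U_mult U_inv)

lemma U_one: "isU N g 1" unfolding isU_def using one by simp

lemma U_pow: "isU N g x \<Longrightarrow> isU N g (x ^ n)"
  by (induction n) (auto intro: U_mult U_one)

lemma U_neg: "isU N g x \<Longrightarrow> isU N g (- x)"
  unfolding isU_def using ZG_neg by auto

lemma U_prod: "(\<And>i. i \<in> S \<Longrightarrow> isU N g (f i)) \<Longrightarrow> isU N g (prod f S)"
  by (induction S rule: infinite_finite_induct) (auto intro: U_one U_mult)

lemma U_root: assumes "x \<in> ZG N g" "x ^ n = 1" "n > 0" shows "isU N g x"
proof -
  have n: "n > 0" using assms(3) .
  have "x * x^(n-1) = x^n" using n by (cases n) auto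
  then have "x * x^(n-1) = 1" using assms(2) by simp
  then have "inverse x = x^(n-1)" by (rule inverse_unique)
  then show ?thesis unfolding isU_def using assms pow by (auto simp: zero_power)
qed


lemma cyc_unit:
  assumes w: "w \<in> ZG N g" and wq: "w ^ q = 1" and q: "prime q"
    and prim: "\<And>k. 0 < k \<Longrightarrow> k < q \<Longrightarrow> w ^ k \<noteq> 1"
    and k: "0 < k" "k < q"
  shows "isU N g ((1 - w^k) / (1 - w))"
proof -
  have q1: "q > 1" using q prime_gt_1_nat by blast
  have w1: "1 - w \<noteq> 0" using prim[of 1] q1 by simp
  have wk1: "1 - w^k \<noteq> 0" using prim[OF k] by simp
  have "(1 - w^k) / (1 - w) = (\<Sum>i<k. w^i)"
    using w1 by (simp add: one_diff_power_eq[of w k])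
  also have "\<dots> \<in> ZG N g" by (intro ZG_sum pow w)
  finally have A: "(1 - w^k) / (1 - w) \<in> ZG N g" .
  have "coprime q k" using prime_imp_coprime[OF q] k by (simp add: nat_dvd_not_less)
  then have "gcd k q = 1" by (simp add: coprime_iff_gcd_eq_1 gcd.commute)
  then obtain x y where xy: "k * x = q * y + 1" using bezout_nat[of k q] k by auto
  have "(w^k)^x = w" using wq by (simp add: xy flip: power_mult) (simp add: power_add power_mult)
  then have "(1 - w) / (1 - w^k) = (\<Sum>i<x. (w^k)^i)"
    using wk1 one_diff_power_eq[of "w^k" x] by simp
  also have "\<dots> \<in> ZG N g" by (intro ZG_sum pow w)
  finally have B: "inverse ((1 - w^k) / (1 - w)) \<in> ZG N g" by simp
  show ?thesis unfolding isU_def using A B w1 wk1 by simp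
qed

lemma alg_id:
  fixes a b w T E F s :: complex
  assumes "a \<noteq> 0" "b \<noteq> 0" "w \<noteq> 0" "T \<noteq> 0" "E \<noteq> 0"
  shows "- (s * (a * b * F)^2 / T^2) / ((- a * E / w)^2 * b^2) = - s * (F * w / (T * E))^2"
  using assms by (simp add: field_simps power2_eq_square)

lemma main_G:
  assumes w: "w \<in> ZG N g" and wq: "w ^ q = 1" and q: "prime q" "odd q"
    and prim: "\<And>k. 0 < k \<Longrightarrow> k < q \<Longrightarrow> w ^ k \<noteq> 1"
  shows "\<exists>u. isU N g u \<and>
     - of_nat q / ((w - inverse w)^2 * (1 - w)^(q - 3)) = (-1)^((q+1) div 2) * u^2"
proof -
  define h where "h = (q - 1) div 2"
  have q1: "q > 1" using q prime_gt_1_nat by blast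
  have qh: "q = 2*h+1" using q(2) q1 unfolding h_def by presburger
  have q2: "q \<noteq> 2" using q(2) by auto
  then have h1: "h \<ge> 1" using q1 qh by auto
  have w0: "w \<noteq> 0" using wq q1 by (auto simp: zero_power)
  have a0: "1 - w \<noteq> 0" using prim[of 1] q1 by simp
  have wU: "isU N g w" using U_root[OF w wq] q1 by simp
  define e where "e k = (1 - w^k) / (1 - w)" for k
  have eU: "isU N g (e k)" if "0 < k" "k < q" for k
    unfolding e_def using cyc_unit[OF w wq q(1) prim that] .
  define F where "F = (\<Prod>k\<in>{1..h}. e k)"
  have FU: "isU N g F" unfolding F_def by (rule U_prod, rule eU) (use qh in auto)
  define r where "r = w^(h+1)"
  have r2: "r^2 = w"
  proof -
    have "r^2 = w^((2*h+1)+1)" unfolding r_def power_mult[symmetric] by (simp add: algebra_simps)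
    also have "\<dots> = w^q * w" unfolding power_add qh by simp
    finally show ?thesis using wq by simp
  qed
  define T where "T = (\<Prod>k\<in>{1..h}. r^k)"
  have TU: "isU N g T" unfolding T_def r_def by (intro U_prod U_pow wU)
  have T2: "T^2 = (\<Prod>k\<in>{1..h}. w^k)"
  proof -
    have "T^2 = (\<Prod>k\<in>{1..h}. (r^k)^2)" unfolding T_def by (rule prod_power_distrib)
    also have "\<dots> = (\<Prod>k\<in>{1..h}. (r^2)^k)" by (rule prod.cong) (auto simp flip: power_mult simp: mult.commute)
    finally show ?thesis unfolding r2 .
  qed
  have e2U: "isU N g (e 2)" using eU[of 2] q1 q2 by simp
  define E where "E = e 2"
  have cyc: "(\<Prod>k\<in>{1..<q}. 1 - w^k) = of_nat q"
    using cyclo_prod[OF _ wq prim] q1 by simp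
  have split: "(\<Prod>k\<in>{1..<q}. 1 - w^k) = (\<Prod>k\<in>{1..h}. 1 - w^k) * (\<Prod>k\<in>{1..h}. 1 - w^(q-k))"
  proof -
    have "{1..<q} = {1..h+h}" using qh by auto
    then have "(\<Prod>k\<in>{1..<q}. 1 - w^k) = (\<Prod>k\<in>{1..h}. 1 - w^k) * (\<Prod>k\<in>{h+1..h+h}. 1 - w^k)"
      using prod.ub_add_nat[of 1 h "\<lambda>k. 1 - w^k" h] by simp
    also have "(\<Prod>k\<in>{h+1..h+h}. 1 - w^k) = (\<Prod>k\<in>{1..h}. 1 - w^(q-k))"
      by (rule prod.reindex_bij_witness[of _ "\<lambda>k. q - k" "\<lambda>k. q - k"]) (use qh in auto)
    finally show ?thesis .
  qed
  have refl_k: "1 - w^(q-k) = - (1 - w^k) / w^k" if "k \<le> q" for k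
  proof -
    have "w^(q-k) * w^k = 1" using that wq by (simp flip: power_add)
    then have "w^(q-k) = 1 / w^k" using w0 by (simp add: field_simps)
    then show ?thesis using w0 by (simp add: field_simps)
  qed
  have P1: "(\<Prod>k\<in>{1..h}. 1 - w^k) = (1 - w)^h * F"
  proof -
    have "(\<Prod>k\<in>{1..h}. 1 - w^k) = (\<Prod>k\<in>{1..h}. (1 - w) * e k)"
      by (rule prod.cong) (use a0 in \<open>auto simp: e_def\<close>)
    then show ?thesis by (simp add: prod.distrib F_def)
  qed
  have P2: "(\<Prod>k\<in>{1..h}. 1 - w^(q-k)) = (-1)^h * (\<Prod>k\<in>{1..h}. 1 - w^k) / T^2"
  proof -
    have "(\<Prod>k\<in>{1..h}. 1 - w^(q-k)) = (\<Prod>k\<in>{1..h}. (-1) * (1 - w^k) / w^k)"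
      by (rule prod.cong) (use qh refl_k in auto)
    also have "\<dots> = (\<Prod>k\<in>{1..h}. (-1::complex)) * (\<Prod>k\<in>{1..h}. 1 - w^k) / (\<Prod>k\<in>{1..h}. w^k)"
      by (simp only: prod.distrib prod_dividef)
    finally show ?thesis unfolding T2 by simp
  qed
  have qform: "of_nat q = (-1)^h * ((1 - w)^h * F)^2 / T^2"
    using cyc split P1 P2 by (simp add: power2_eq_square)
  have wi: "w - inverse w = - (1 - w) * E / w"
    unfolding E_def e_def using a0 w0 by (simp add: field_simps power2_eq_square)
  have T0: "T \<noteq> 0" and E0: "E \<noteq> 0" and F0: "F \<noteq> 0"
    using TU e2U FU unfolding isU_def E_def by auto
  define u where "u = F * w / (T * E)"
  have uU: "isU N g u" unfolding u_def E_def by (intro U_div U_mult FU wU TU e2U)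
  have qq: "(q + 1) div 2 = h + 1" "q - 3 = 2 * (h - 1)" using qh h1 by auto
  have hh: "(1 - w)^h = (1 - w) * (1 - w)^(h-1)" using h1 by (cases h) auto
  have "- of_nat q / ((w - inverse w)^2 * (1 - w)^(q - 3)) = (-1)^((q+1) div 2) * u^2"
  proof -
    have b0: "(1 - w)^(h-1) \<noteq> 0" using a0 by simp
    have *: "(1-w)^(2*(h-1)) = ((1 - w)^(h-1))^2" by (metis power_mult mult.commute)
    have **: "(-1::complex)^(h+1) = - ((-1)^h)" by simp
    have "- of_nat q / ((w - inverse w)^2 * (1 - w)^(q - 3)) = - ((-1)^h * ((1 - w) * (1 - w)^(h-1) * F)^2 / T^2) / ((- (1 - w) * E / w)^2 * ((1 - w)^(h-1))^2)"
      by (simp only: qform wi qq hh * mult.assoc)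
    also have "\<dots> = - ((-1)^h) * (F * w / (T * E))^2" by (rule alg_id[OF a0 b0 w0 T0 E0])
    also have "\<dots> = (-1)^((q+1) div 2) * u^2" by (simp only: qq ** u_def)
    finally show ?thesis .
  qed
  then show ?thesis using uU by blast
qed

end



lemma gsq_sum:
  fixes z :: complex
  assumes zm: "z ^ m = 1" and z2: "z^2 \<noteq> 1" and m: "m > 0"
  shows "(\<Sum>n<m. (z^n - inverse z ^ n)^2) = - 2 * of_nat m"
proof -
  have z0: "z \<noteq> 0" using zm m by (auto simp: zero_power)
  have e: "(z^n - inverse z ^ n)^2 = (z^2)^n + (inverse z ^ 2)^n - 2" for n
  proof -
    have a: "(z^2)^n = (z^n)^2" "(inverse z ^ 2)^n = (inverse z ^ n)^2"
      by (simp_all flip: power_mult add: mult.commute)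
    have b: "z^n * inverse z ^ n = 1" using z0 by (simp add: power_inverse)
    show ?thesis unfolding a using b by (simp add: power2_eq_square algebra_simps)
  qed
  have "(z^2)^m = (z^m)^2" by (simp flip: power_mult add: mult.commute)
  then have s1': "(z^2)^m = 1" using zm by simp
  have s1: "(\<Sum>n<m. (z^2)^n) = 0"
  proof -
    show ?thesis using z2 s1' by (simp add: sum_gp_strict)
  qed
  have s2: "(\<Sum>n<m. (inverse z ^ 2)^n) = 0"
  proof -
    have "(inverse z ^ 2)^m = inverse ((z^2)^m)" by (simp add: power_inverse)
    also have "(z^2)^m = 1" using s1' .
    finally have "(inverse z ^ 2)^m = 1" by simp
    moreover have "inverse z ^ 2 \<noteq> 1" using z2 by (simp add: power_inverse)
    ultimately show ?thesis by (simp add: sum_gp_strict)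
  qed
  show ?thesis unfolding e using s1 s2 by (simp add: sum.distrib sum_subtractf)
qed

lemma g_refl:
  fixes z :: complex
  assumes zm: "z ^ m = 1" and n: "n \<le> m" and m: "m > 0"
  shows "(z^(m-n) - inverse z ^ (m-n))^2 = (z^n - inverse z ^ n)^2"
proof -
  have z0: "z \<noteq> 0" using zm m by (auto simp: zero_power)
  have "z^(m-n) * z^n = 1" using zm n by (simp flip: power_add)
  then have a: "z^(m-n) = inverse z ^ n" using z0 by (simp add: field_simps power_inverse)
  have b: "inverse z ^ (m-n) = z ^ n" by (simp add: power_inverse a)
  show ?thesis unfolding a b by (simp add: power2_commute)
qed

lemma sum_pairs: "(\<Sum>n<2*h. f n) = (\<Sum>j<h. f (2*j) + f (2*j+1))" for f :: "nat \<Rightarrow> complex"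
  by (induction h) (simp_all add: algebra_simps)

lemma odd_sum:
  fixes z :: complex
  assumes zm: "z ^ p = 1" and z2: "z^2 \<noteq> 1" and p: "p = 2*h+1"
  shows "(\<Sum>j<h. (z^(2*j+1) - inverse z ^ (2*j+1))^2) = - of_nat p"
proof -
  define g where "g n = (z^n - inverse z ^ n)^2" for n
  have "(\<Sum>n<p. g n) = g 0 + (\<Sum>n<2*h. g (Suc n))" unfolding p Suc_eq_plus1[symmetric] by (rule sum.lessThan_Suc_shift)
  also have "g 0 = 0" unfolding g_def by simp
  also have "(\<Sum>n<2*h. g (Suc n)) = (\<Sum>j<h. g (2*j+1) + g (2*j+2))" by (simp add: sum_pairs)
  also have "\<dots> = (\<Sum>j<h. g (2*j+1)) + (\<Sum>j<h. g (2*j+2))" by (simp add: sum.distrib)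
  also have "(\<Sum>j<h. g (2*j+2)) = (\<Sum>j<h. g (2*(h - Suc j)+1))"
  proof (rule sum.cong[OF refl])
    fix j assume "j \<in> {..<h}"
    then have i1: "2*(h - Suc j)+1 = p - (2*j+2)" and i2: "2*j+2 \<le> p" using p by auto
    have "g (p - (2*j+2)) = g (2*j+2)" unfolding g_def by (rule g_refl[OF zm i2]) (use p in simp)
    then show "g (2*j+2) = g (2*(h - Suc j)+1)" unfolding i1 by simp
  qed
  also have "\<dots> = (\<Sum>j<h. g (2*j+1))" by (rule sum.nat_diff_reindex[where g = "\<lambda>j. g (2*j+1)"])
  finally have "(\<Sum>n<p. g n) = 2 * (\<Sum>j<h. g (2*j+1))" by simp
  moreover have "(\<Sum>n<p. g n) = - 2 * of_nat p" unfolding g_def by (rule gsq_sum[OF zm z2]) (use p in auto)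
  ultimately show ?thesis unfolding g_def by simp
qed




lemma alpha_pow: "alpha_p p ^ k = cis (real k * (2*pi/(4*real p)))"
  by (simp add: alpha_p_def DeMoivre)

lemma alpha_4p: "p > 0 \<Longrightarrow> alpha_p p ^ (4*p) = 1"
  unfolding alpha_pow by simp

lemma alpha_p_i: "p > 0 \<Longrightarrow> alpha_p p ^ p = \<i>"
proof -
  assume p: "p > 0"
  have "real p * (2*pi/(4*real p)) = pi/2" using p by (simp add: field_simps)
  then show ?thesis unfolding alpha_pow using p by simp
qed

lemma alpha_4: "p > 0 \<Longrightarrow> alpha_p p ^ 4 = cis (2*pi/real p)"
proof -
  assume p: "p > 0"
  have "real 4 * (2*pi/(4*real p)) = 2*pi/real p" using p by (simp add: field_simps)
  then show ?thesis unfolding alpha_pow by simp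
qed

lemma A_sq: "A_p p ^ 2 = alpha_p p ^ 4"
  unfolding A_p_def by (simp flip: power_mult)

lemma ZG_rat_sum: "finite S \<Longrightarrow> (\<Sum>k\<in>S. of_int (c k) * g^k) \<in> rat_field_gen g"
proof (induction S rule: finite_induct)
  case empty
  have "poly (map_poly of_rat (0::rat poly)) g = 0" by simp
  then have "\<exists>q'. (\<Sum>k\<in>{}. of_int (c k) * g^k) = poly (map_poly of_rat q') g" by (metis sum.empty)
  then show ?case by (simp add: rat_field_gen_def)
next
  case (insert k S)
  then obtain q where q: "(\<Sum>k\<in>S. of_int (c k) * g^k) = poly (map_poly of_rat q) g"
    unfolding rat_field_gen_def by auto
  have "poly (map_poly of_rat (q + monom (of_int (c k)) k)) g = (\<Sum>k\<in>insert k S. of_int (c k) * g^k)"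
    using insert q by (simp add: of_rat_hom.map_poly_hom_add map_poly_monom poly_monom)
  then have "\<exists>q'. (\<Sum>k\<in>insert k S. of_int (c k) * g^k) = poly (map_poly of_rat q') g" by metis
  then show ?case by (simp add: rat_field_gen_def)
qed

lemma ZG_Op:
  assumes gen: "gen_p p = g" and gN: "g ^ N = 1" and N: "N > 0" and x: "x \<in> ZG N g"
  shows "x \<in> O_p p"
proof -
  from x obtain c where c: "x = (\<Sum>k<N. of_int (c k) * g^k)" unfolding ZG_def by auto
  have "x \<in> rat_field_gen g" unfolding c by (rule ZG_rat_sum) simp
  moreover have "algebraic_integer x" by (rule ZG_alg_int[OF gN N x])
  ultimately show ?thesis unfolding O_p_def gen by simp
qed

lemma finish:
  assumes gen: "gen_p p = g" and gN: "g ^ N = 1" and N: "N > 0"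
    and c: "isU N g c" "c^2 = s" and u: "isU N g u" and DX: "(D/X)^2 = s * u^2" and X0: "X \<noteq> 0"
  shows "assoc_p p D X"
proof -
  interpret rootring N g using gN N by unfold_locales
  have "(D/X)^2 = (c*u)^2" using DX c by (simp add: power_mult_distrib)
  then have "D/X = c*u \<or> D/X = -(c*u)" by (simp add: power2_eq_iff)
  then have U: "isU N g (D/X)" using U_mult[OF c(1) u] U_neg by auto
  then have D0: "D \<noteq> 0" unfolding isU_def by auto
  have "X/D = inverse (D/X)" by simp
  then show ?thesis unfolding assoc_p_def using U D0 X0 ZG_Op[OF gen gN N] unfolding isU_def by auto
qed

lemma qint_sq: "qint p n ^ 2 = ((A_p p ^ 2)^n - inverse (A_p p ^ 2) ^ n)^2 / (A_p p ^ 2 - inverse (A_p p ^ 2))^2"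
proof -
  have "A_p p ^ (2*n) = (A_p p ^ 2)^n" "inverse (A_p p) ^ (2*n) = inverse (A_p p ^ 2) ^ n"
    "inverse (A_p p) ^ 2 = inverse (A_p p ^ 2)"
    by (simp_all add: power_mult power_inverse)
  then show ?thesis unfolding qint_def by (simp add: power_divide)
qed

lemma bracket_sq: "bracket_e p i ^ 2 = qint p (i+1) ^ 2"
  unfolding bracket_e_def by (simp add: power_mult_distrib flip: power_mult)

lemma key:
  assumes gen: "gen_p p = g" and gN: "g ^ N = 1" and N: "N > 0" and w: "w \<in> ZG N g"
    and wq: "w ^ q = 1" and q: "prime q" "odd q"
    and prim: "\<And>k. 0 < k \<Longrightarrow> k < q \<Longrightarrow> w ^ k \<noteq> 1"
    and c: "isU N g c" "c^2 = (-1)^((q+1) div 2)"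
    and DX: "(D/X)^2 = - of_nat q / ((w - inverse w)^2 * (1 - w)^(q - 3))" and X0: "X \<noteq> 0"
  shows "assoc_p p D X"
proof -
  interpret rootring N g using gN N by unfold_locales
  obtain u where u: "isU N g u"
    "- of_nat q / ((w - inverse w)^2 * (1 - w)^(q - 3)) = (-1)^((q+1) div 2) * u^2"
    using main_G[OF w wq q prim] by blast
  show ?thesis by (rule finish[OF gen gN N c u(1)]) (use DX u(2) X0 in auto)
qed

lemma alpha_c:
  assumes p: "p > 0"
  shows "isU (4*p) (alpha_p p) (alpha_p p ^ (p*k)) \<and> (alpha_p p ^ (p*k))^2 = (-1)^k"
proof
  interpret rootring "4*p" "alpha_p p" using alpha_4p[OF p] p by unfold_locales auto
  have "(alpha_p p ^ (p*k))^4 = (alpha_p p ^ (4*p))^k" by (simp flip: power_mult add: mult_ac)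
  then have "(alpha_p p ^ (p*k))^4 = 1" using alpha_4p[OF p] by simp
  then show "isU (4*p) (alpha_p p) (alpha_p p ^ (p*k))"
    using U_root[of _ 4] ZG_gpow[OF alpha_4p[OF p]] p by auto
  have "(alpha_p p ^ (p*k))^2 = ((alpha_p p ^ p)^2)^k" by (simp flip: power_mult add: mult_ac)
  then show "(alpha_p p ^ (p*k))^2 = (-1)^k" using alpha_p_i[OF p] by simp
qed

lemma odd_case:
  assumes p: "prime p" "odd p" and D: "D^2 = D_sq p"
  shows "assoc_p p D ((1 - (A_p p)^2) ^ ((p - 3) div 2))"
proof -
  have p2: "p \<ge> 2" using p prime_ge_2_nat by blast
  have p3: "p \<ge> 3" using p2 p(2) by (cases "p = 2") auto
  have p0: "p > 0" using p3 by simp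
  define h where "h = (p - 1) div 2"
  have ph: "p = 2*h+1" using p(2) p3 unfolding h_def by presburger
  have h1: "h \<ge> 1" using ph p3 by simp
  define z where "z = alpha_p p ^ 4"
  have zc: "z = cis (2*pi/real p)" unfolding z_def by (rule alpha_4[OF p0])
  have zA: "A_p p ^ 2 = z" unfolding z_def by (rule A_sq)
  have zp: "z ^ p = 1" unfolding z_def using alpha_4p[OF p0] by (simp flip: power_mult)
  have prim: "\<And>k. 0 < k \<Longrightarrow> k < p \<Longrightarrow> z ^ k \<noteq> 1"
    unfolding zc using cis_pow_ne1 p0 by blast
  have z2: "z^2 \<noteq> 1" using prim[of 2] p3 by simp
  have col: "colours p = (\<lambda>j. 2*j) ` {..<h}"
  proof -
    have "colours p = {i. i \<le> p - 3 \<and> even i}" unfolding colours_def using p(2) by simp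
    also have "\<dots> = (\<lambda>j. 2*j) ` {..<h}"
    proof (rule Set.set_eqI)
      fix i
      show "i \<in> {i. i \<le> p - 3 \<and> even i} \<longleftrightarrow> i \<in> (\<lambda>j. 2*j) ` {..<h}"
      proof
        assume "i \<in> {i. i \<le> p - 3 \<and> even i}"
        then obtain j where "i = 2*j" "2*j \<le> p - 3" by (auto elim!: evenE)
        moreover have "j < h" using \<open>2*j \<le> p - 3\<close> ph h1 by simp
        ultimately show "i \<in> (\<lambda>j. 2*j) ` {..<h}" by (intro image_eqI[of _ _ j]) auto
      next
        assume "i \<in> (\<lambda>j. 2*j) ` {..<h}"
        then show "i \<in> {i. i \<le> p - 3 \<and> even i}" using ph by auto
      qed
    qed
    finally show ?thesis .
  qed
  have Dsq: "D_sq p = - of_nat p / (z - inverse z)^2"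
  proof -
    have "D_sq p = (\<Sum>i\<in>colours p. (z^(i+1) - inverse z ^ (i+1))^2 / (z - inverse z)^2)"
      unfolding D_sq_def bracket_sq qint_sq zA ..
    also have "\<dots> = (\<Sum>j<h. (z^(2*j+1) - inverse z ^ (2*j+1))^2 / (z - inverse z)^2)"
      unfolding col by (subst sum.reindex) (auto simp: inj_on_def)
    also have "\<dots> = (\<Sum>j<h. (z^(2*j+1) - inverse z ^ (2*j+1))^2) / (z - inverse z)^2"
      by (simp add: sum_divide_distrib)
    also have "\<dots> = - of_nat p / (z - inverse z)^2" using odd_sum[OF zp z2 ph] by simp
    finally show ?thesis .
  qed
  have Xe: "(1 - (A_p p)^2) ^ ((p - 3) div 2) = (1 - z)^(h-1)"
  proof -
    have "(p - 3) div 2 = h - 1" using ph by simp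
    then show ?thesis unfolding zA by simp
  qed
  have X0: "(1 - z)^(h-1) \<noteq> 0" using prim[of 1] p3 by simp
  have pe: "p - 3 = 2*(h-1)" using ph h1 by simp
  have DX: "(D / (1 - z)^(h-1))^2 = - of_nat p / ((z - inverse z)^2 * (1 - z)^(p - 3))"
  proof -
    have "(1 - z)^(2*(h-1)) = ((1 - z)^(h-1))^2" by (simp flip: power_mult add: mult.commute)
    then show ?thesis unfolding power_divide D Dsq pe by simp
  qed
  show ?thesis
  proof (cases "p mod 4 = 3")
    case True
    have gen: "gen_p p = A_p p" unfolding gen_p_def using True by simp
    have gN: "A_p p ^ (2*p) = 1" unfolding A_p_def using alpha_4p[OF p0] by (simp flip: power_mult add: mult_ac)
    have zZ: "z \<in> ZG (2*p) (A_p p)" unfolding zA[symmetric] by (rule ZG_gpow[OF gN]) (use p0 in simp)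
    interpret rootring "2*p" "A_p p" using gN p0 by unfold_locales auto
    have ev: "even ((p+1) div 2)" using True by presburger
    show ?thesis unfolding Xe
      by (rule key[OF gen gN _ zZ zp p prim U_one _ DX X0]) (use p0 ev in auto)
  next
    case False
    have gen: "gen_p p = alpha_p p" unfolding gen_p_def using False by simp
    have zZ: "z \<in> ZG (4*p) (alpha_p p)" unfolding z_def by (rule ZG_gpow[OF alpha_4p[OF p0]]) (use p0 in simp)
    obtain c where c: "isU (4*p) (alpha_p p) c" "c^2 = (-1)^((p+1) div 2)"
      using alpha_c[OF p0] by blast
    show ?thesis unfolding Xe
      by (rule key[OF gen alpha_4p[OF p0] _ zZ zp p prim c DX X0]) (use p0 in auto)
  qed
qed

lemma even_case:
  assumes q: "prime q" "odd q" and pq: "p = 2 * q" and D: "D^2 = D_sq p"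
  shows "assoc_p p D (complex_of_real (sqrt 2) * (1 + (alpha_p p)^4) ^ ((p div 2 - 3) div 2))"
proof -
  have q2: "q \<ge> 2" using q prime_ge_2_nat by blast
  have q3: "q \<ge> 3" using q2 q(2) by (cases "q = 2") auto
  have p0: "p > 0" using q3 pq by simp
  define h where "h = (q - 1) div 2"
  have qh: "q = 2*h+1" using q(2) q3 unfolding h_def by presburger
  have h1: "h \<ge> 1" using qh q3 by simp
  define z where "z = alpha_p p ^ 4"
  define w where "w = - z"
  have zc: "z = cis (2*pi/real p)" unfolding z_def by (rule alpha_4[OF p0])
  have zA: "A_p p ^ 2 = z" unfolding z_def by (rule A_sq)
  have zq: "z ^ q = -1"
  proof -
    have "real q * (2*pi/real p) = pi" using pq q3 by (simp add: field_simps)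
    then show ?thesis unfolding zc DeMoivre by simp
  qed
  have wq: "w ^ q = 1" unfolding w_def using zq q(2) by (simp add: power_minus')
  have primz: "\<And>k. 0 < k \<Longrightarrow> k < p \<Longrightarrow> z ^ k \<noteq> 1"
    unfolding zc using cis_pow_ne1 p0 by blast
  have prim: "w ^ k \<noteq> 1" if k: "0 < k" "k < q" for k
  proof
    assume "w ^ k = 1"
    then have "(w^k)^2 = 1" by simp
    then have "z^(2*k) = 1" unfolding w_def by (simp flip: power_mult add: mult.commute)
    then show False using primz[of "2*k"] k pq by simp
  qed
  have w2: "w^2 \<noteq> 1" using prim[of 2] q3 by simp
  have sqz: "(z^n - inverse z ^ n)^2 = (w^n - inverse w ^ n)^2" for n
  proof -
    have "z^n - inverse z ^ n = (-1)^n * (w^n - inverse w ^ n)"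
      unfolding w_def by (simp add: power_minus' algebra_simps power_inverse power_mult_distrib)
    then show ?thesis by (simp add: power_mult_distrib flip: power_mult)
  qed
  have col: "colours p = {..<q-1}" unfolding colours_def using pq q3 by auto
  have Dsq: "D_sq p = - 2 * of_nat q / (w - inverse w)^2"
  proof -
    have "D_sq p = (\<Sum>i\<in>colours p. (w^(i+1) - inverse w ^ (i+1))^2 / (w - inverse w)^2)"
      unfolding D_sq_def bracket_sq qint_sq zA sqz using sqz[of 1] by simp
    also have "\<dots> = (\<Sum>i<q-1. (w^(Suc i) - inverse w ^ (Suc i))^2) / (w - inverse w)^2"
      unfolding col by (simp add: sum_divide_distrib)
    also have "(\<Sum>i<q-1. (w^(Suc i) - inverse w ^ (Suc i))^2) = (\<Sum>n<q. (w^n - inverse w ^ n)^2)"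
    proof -
      have "q = Suc (q - 1)" using q3 by simp
      then have "(\<Sum>n<q. (w^n - inverse w ^ n)^2) = (\<Sum>n<Suc (q-1). (w^n - inverse w ^ n)^2)" by simp
      also have "\<dots> = (\<Sum>i<q-1. (w^(Suc i) - inverse w ^ (Suc i))^2)"
        by (subst sum.lessThan_Suc_shift) simp
      finally show ?thesis by simp
    qed
    also have "\<dots> = - 2 * of_nat q" by (rule gsq_sum[OF wq w2]) (use q3 in simp)
    finally show ?thesis .
  qed
  have Xe: "(1 + (alpha_p p)^4) ^ ((p div 2 - 3) div 2) = (1 - w)^(h-1)"
  proof -
    have "(p div 2 - 3) div 2 = h - 1" using pq qh by simp
    then show ?thesis unfolding w_def z_def by simp
  qed
  have X0: "complex_of_real (sqrt 2) * (1 - w)^(h-1) \<noteq> 0" using prim[of 1] q3 by simp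
  have qe: "q - 3 = 2*(h-1)" using qh h1 by simp
  have DX: "(D / (complex_of_real (sqrt 2) * (1 - w)^(h-1)))^2 = - of_nat q / ((w - inverse w)^2 * (1 - w)^(q - 3))"
  proof -
    have "(1 - w)^(2*(h-1)) = ((1 - w)^(h-1))^2" by (simp flip: power_mult add: mult.commute)
    moreover have "(complex_of_real (sqrt 2))^2 = 2" by (simp flip: of_real_power)
    ultimately show ?thesis unfolding power_divide D Dsq qe power_mult_distrib by simp
  qed
  have gen: "gen_p p = alpha_p p" unfolding gen_p_def using pq q(2) by presburger
  have wZ: "w \<in> ZG (4*p) (alpha_p p)" unfolding w_def z_def
    by (rule ZG_neg, rule ZG_gpow[OF alpha_4p[OF p0]]) (use p0 in simp)
  obtain c where c: "isU (4*p) (alpha_p p) c" "c^2 = (-1)^((q+1) div 2)"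
    using alpha_c[OF p0] by blast
  show ?thesis unfolding Xe
    by (rule key[OF gen alpha_4p[OF p0] _ wZ wq q prim c DX X0]) (use p0 in auto)
qed


theorem lemma2p4:
  fixes p :: nat and D :: complex
  assumes D: "D^2 = D_sq p"
  shows "(prime p \<and> odd p \<longrightarrow>
            assoc_p p D ((1 - (A_p p)^2) ^ ((p - 3) div 2)))
       \<and> ((\<exists>q::nat. prime q \<and> odd q \<and> p = 2 * q) \<longrightarrow>
            assoc_p p D (complex_of_real (sqrt 2) * (1 + (alpha_p p)^4) ^ ((p div 2 - 3) div 2)))"
  using odd_case[OF _ _ D] even_case[OF _ _ _ D] by blast

end
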